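(* Let $X,Y$ be random variables, let $F_{Y\mid X}(y\mid x)$ denote a (regular) conditional distribution function of $Y$ given $X=x$, and for a non-decreasing Borel function $h$ let $h^*(x)=\mathbb E[h(Y)\mid X=x]=\int h(y)\,F_{Y\mid X}(\mathrm dy\mid x)$ (considered for those $h$ for which this is finite for every $x$). The following are equivalent: (i) for all non-decreasing Borel functions $g$ and $h$, the functions $g$ and $h^*$ are weakly comonotonic with respect to all product measures $\varrho_1\times\varrho_2$ of Borel probability measures on $\mathbb R$, i.e. $\iint_{\mathbb R^2}(g(x)-g(x'))(h^*(x)-h^*(x'))\,\varrho_1(\mathrm dx)\varrho_2(\mathrm dx')\ge0$ whenever this integral exists (in particular $(g(x)-g(x'))(h^*(x)-h^*(x'))\ge0$ for all $x,x'$); (ii) $Y$ is positively regression dependent on $X$, i.e. for every $y\in\mathbb R$ the function $x\mapsto F_{Y\mid X}(y\mid x)$ is non-increasing. *)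

theory Defs
  imports "HOL-Probability.Probability"
begin

definition regular_cond_distr ::
  "'a measure \<Rightarrow> ('a \<Rightarrow> real) \<Rightarrow> ('a \<Rightarrow> real) \<Rightarrow> (real \<Rightarrow> real measure) \<Rightarrow> bool" where
  "regular_cond_distr M X Y K \<longleftrightarrow>
     (\<forall>x. prob_space (K x) \<and> sets (K x) = sets borel) \<and>
     (\<forall>B \<in> sets borel. (\<lambda>x. measure (K x) B) \<in> borel_measurable borel) \<and>
     (\<forall>A \<in> sets borel. \<forall>B \<in> sets borel.
        measure M {\<omega> \<in> space M. X \<omega> \<in> A \<and> Y \<omega> \<in> B}
        = (\<integral>\<omega>. indicator A (X \<omega>) * measure (K (X \<omega>)) B \<partial>M))"

definition cond_cdf :: "(real \<Rightarrow> real measure) \<Rightarrow> real \<Rightarrow> real \<Rightarrow> real" where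
  "cond_cdf K y x = measure (K x) {..y}"

definition cond_exp_fun :: "(real \<Rightarrow> real measure) \<Rightarrow> (real \<Rightarrow> real) \<Rightarrow> real \<Rightarrow> real" where
  "cond_exp_fun K h x = (\<integral>y. h y \<partial>(K x))"

definition borel_prob :: "real measure \<Rightarrow> bool" where
  "borel_prob \<rho> \<longleftrightarrow> prob_space \<rho> \<and> sets \<rho> = sets borel"

definition weakly_comonotonic ::
  "(real \<Rightarrow> real) \<Rightarrow> (real \<Rightarrow> real) \<Rightarrow> real measure \<Rightarrow> real measure \<Rightarrow> bool" where
  "weakly_comonotonic g f \<rho>1 \<rho>2 \<longleftrightarrow>
     (let u = (\<lambda>(x, x'). (g x - g x') * (f x - f x')) in
      integrable (\<rho>1 \<Otimes>\<^sub>M \<rho>2) u \<longrightarrow> (\<integral>z. u z \<partial>(\<rho>1 \<Otimes>\<^sub>M \<rho>2)) \<ge> 0)"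

definition pos_regr_dep :: "(real \<Rightarrow> real measure) \<Rightarrow> bool" where
  "pos_regr_dep K \<longleftrightarrow> (\<forall>y. antimono (cond_cdf K y))"

end

theory Submission
  imports Defs
begin

lemma sd_lower:
  fixes mu nu :: "real measure"
  assumes pm: "prob_space mu" "sets mu = sets borel" and pn: "prob_space nu" "sets nu = sets borel"
    and cdf: "\<forall>y. measure nu {..y} \<le> measure mu {..y}"
    and Lb: "L \<in> sets borel" and down: "\<forall>x y. x \<in> L \<longrightarrow> y \<le> x \<longrightarrow> y \<in> L"
  shows "measure nu L \<le> measure mu L"
proof -
  interpret mu: prob_space mu by fact
  interpret nu: prob_space nu by fact
  have smu: "space mu = UNIV" using sets_eq_imp_space_eq[OF pm(2)] by simp
  have snu: "space nu = UNIV" using sets_eq_imp_space_eq[OF pn(2)] by simp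
  show ?thesis
  proof (cases "L = UNIV")
    case True
    then show ?thesis using mu.prob_space nu.prob_space smu snu by simp
  next
    case False
    then obtain z where z: "z \<notin> L" by auto
    have lt: "x < z" if "x \<in> L" for x using down that z by (meson linorder_not_less)
    show ?thesis
    proof (cases "L = {}")
      case True then show ?thesis by simp
    next
      case ne: False
      have bdd: "bdd_above L" using lt by (meson bdd_aboveI less_imp_le)
      define a where "a = Sup L"
      have le: "x \<le> a" if "x \<in> L" for x using bdd that cSup_upper a_def by blast
      have lt2: "x \<in> L" if xa: "x < a" for x
      proof -
        obtain l where "l \<in> L" "x < l" using less_cSupD[OF ne] xa a_def by blast
        then show ?thesis using down by auto
      qed
      show ?thesis
      proof (cases "a \<in> L")
        case True
        have "L = {..a}" using le True down by auto
        then show ?thesis using cdf by simp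
      next
        case False
        have Leq: "L = {..<a}" using le lt2 False by (auto simp: order.order_iff_strict)
        define A where "A n = {..a - 1 / real (Suc n)}" for n
        have inc: "incseq A" unfolding A_def
          by (intro monoI) (auto simp: frac_le divide_le_cancel intro: order_trans)
        have un: "(\<Union>n. A n) = {..<a}"
        proof safe
          fix x n assume "x \<in> A n" then show "x < a" unfolding A_def by (auto intro: le_less_trans)
        next
          fix x assume "x < a"
          then obtain n where "1 / real (Suc n) < a - x"
            by (metis diff_gt_0_iff_gt nat_approx_posE)
          then have "x \<in> A n" unfolding A_def by simp
          then show "x \<in> (\<Union>n. A n)" by blast
        qed
        have r1: "range A \<subseteq> sets mu" unfolding A_def pm(2) by auto
        have r2: "range A \<subseteq> sets nu" unfolding A_def pn(2) by auto
        have l1: "(\<lambda>i. measure mu (A i)) \<longlonglongrightarrow> measure mu {..<a}"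
          using mu.finite_Lim_measure_incseq[OF r1 inc] un by simp
        have l2: "(\<lambda>i. measure nu (A i)) \<longlonglongrightarrow> measure nu {..<a}"
          using nu.finite_Lim_measure_incseq[OF r2 inc] un by simp
        have "measure nu {..<a} \<le> measure mu {..<a}"
          by (rule LIMSEQ_le[OF l2 l1]) (auto simp: A_def cdf)
        then show ?thesis using Leq by simp
      qed
    qed
  qed
qed

lemma sd_upper:
  fixes mu nu :: "real measure"
  assumes pm: "prob_space mu" "sets mu = sets borel" and pn: "prob_space nu" "sets nu = sets borel"
    and cdf: "\<forall>y. measure nu {..y} \<le> measure mu {..y}"
    and Ub: "U \<in> sets borel" and up: "\<forall>x y. x \<in> U \<longrightarrow> x \<le> y \<longrightarrow> y \<in> U"
  shows "measure mu U \<le> measure nu U"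
proof -
  interpret mu: prob_space mu by fact
  interpret nu: prob_space nu by fact
  have smu: "space mu = UNIV" using sets_eq_imp_space_eq[OF pm(2)] by simp
  have snu: "space nu = UNIV" using sets_eq_imp_space_eq[OF pn(2)] by simp
  have "measure nu (UNIV - U) \<le> measure mu (UNIV - U)"
    by (rule sd_lower[OF pm pn cdf]) (use Ub up in auto)
  moreover have "measure nu (UNIV - U) = 1 - measure nu U"
    using nu.prob_compl[of U] snu Ub pn(2) by simp
  moreover have "measure mu (UNIV - U) = 1 - measure mu U"
    using mu.prob_compl[of U] smu Ub pm(2) by simp
  ultimately show ?thesis by simp
qed

lemma sd_nn:
  fixes mu nu :: "real measure" and f :: "real \<Rightarrow> real"
  assumes pm: "prob_space mu" "sets mu = sets borel" and pn: "prob_space nu" "sets nu = sets borel"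
    and fm: "f \<in> borel_measurable borel"
    and cmp: "\<And>t. emeasure mu {x. t < f x} \<le> emeasure nu {x. t < f x}"
  shows "(\<integral>\<^sup>+x. ennreal (f x) \<partial>mu) \<le> (\<integral>\<^sup>+x. ennreal (f x) \<partial>nu)"
proof -
  have eq: "(\<integral>\<^sup>+x. ennreal (f x) \<partial>M) = (\<integral>\<^sup>+t. indicator {0..} t * emeasure M {x. t < f x} \<partial>lborel)"
    if sM: "sets M = sets borel" and pM: "prob_space M" for M :: "real measure"
  proof -
    interpret M: prob_space M by fact
    interpret P: pair_sigma_finite M lborel
      by (simp add: M.sigma_finite_measure_axioms lborel.sigma_finite_measure_axioms pair_sigma_finite.intro)
    have "(\<integral>\<^sup>+x. ennreal (f x) \<partial>M) = (\<integral>\<^sup>+x. (\<integral>\<^sup>+t. indicator {0..} t * indicator {x. t < f x} x \<partial>lborel) \<partial>M)"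
    proof (rule nn_integral_cong)
      fix x
      have "(\<lambda>t. indicator {0..} t * indicator {x. t < f x} x) = (indicator {0..<f x} :: real \<Rightarrow> ennreal)"
        by (auto simp: indicator_def)
      then show "ennreal (f x) = (\<integral>\<^sup>+t. indicator {0..} t * indicator {x. t < f x} x \<partial>lborel)"
        by (cases "0 \<le> f x") (auto simp: ennreal_neg)
    qed
    also have "\<dots> = (\<integral>\<^sup>+t. (\<integral>\<^sup>+x. indicator {0..} t * indicator {x. t < f x} x \<partial>M) \<partial>lborel)"
    proof (rule P.Fubini'[symmetric])
      have "(\<lambda>(x, t). indicator {0..} t * indicator {x. t < f x} x :: ennreal) \<in> borel_measurable (borel \<Otimes>\<^sub>M lborel)"
        using fm by measurable
      then show "(\<lambda>(x, t). indicator {0..} t * indicator {x. t < f x} x :: ennreal) \<in> borel_measurable (M \<Otimes>\<^sub>M lborel)"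
        by (subst measurable_cong_sets[OF sets_pair_measure_cong[OF sM refl] refl])
    qed
    also have "\<dots> = (\<integral>\<^sup>+t. indicator {0..} t * emeasure M {x. t < f x} \<partial>lborel)"
    proof (rule nn_integral_cong)
      fix t
      have "{x. t < f x} \<in> sets M" unfolding sM using fm by measurable
      then show "(\<integral>\<^sup>+x. indicator {0..} t * indicator {x. t < f x} x \<partial>M) = indicator {0..} t * emeasure M {x. t < f x}"
        by (simp add: nn_integral_cmult_indicator)
    qed
    finally show ?thesis .
  qed
  show ?thesis
    unfolding eq[OF pm(2) pm(1)] eq[OF pn(2) pn(1)]
    by (intro nn_integral_mono mult_left_mono cmp) auto
qed

lemma nn_fin:
  fixes f :: "real \<Rightarrow> real"
  assumes "integrable M f"
  shows "(\<integral>\<^sup>+x. ennreal (f x) \<partial>M) < \<infinity>"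
proof -
  have "(\<integral>\<^sup>+x. ennreal (f x) \<partial>M) \<le> (\<integral>\<^sup>+x. ennreal (norm (f x)) \<partial>M)"
    by (intro nn_integral_mono) (auto intro: ennreal_leI)
  also have "\<dots> < \<infinity>" using assms by (simp add: integrable_iff_bounded)
  finally show ?thesis .
qed

lemma sd_integral:
  fixes mu nu :: "real measure" and h :: "real \<Rightarrow> real"
  assumes pm: "prob_space mu" "sets mu = sets borel" and pn: "prob_space nu" "sets nu = sets borel"
    and cdf: "\<forall>y. measure nu {..y} \<le> measure mu {..y}"
    and hm: "mono h" "h \<in> borel_measurable borel"
    and im: "integrable mu h" and inu: "integrable nu h"
  shows "(\<integral>x. h x \<partial>mu) \<le> (\<integral>x. h x \<partial>nu)"
proof -
  interpret mu: prob_space mu by fact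
  interpret nu: prob_space nu by fact
  have p1: "(\<integral>\<^sup>+x. ennreal (h x) \<partial>mu) \<le> (\<integral>\<^sup>+x. ennreal (h x) \<partial>nu)"
  proof (rule sd_nn[OF pm pn hm(2)])
    fix t
    have Ub: "{x. t < h x} \<in> sets borel" using hm(2) by measurable
    have "measure mu {x. t < h x} \<le> measure nu {x. t < h x}"
      by (rule sd_upper[OF pm pn cdf Ub]) (metis (mono_tags) mem_Collect_eq monoD less_le_trans hm(1))
    then show "emeasure mu {x. t < h x} \<le> emeasure nu {x. t < h x}"
      by (simp add: mu.emeasure_eq_measure nu.emeasure_eq_measure)
  qed
  have p2: "(\<integral>\<^sup>+x. ennreal (- h x) \<partial>nu) \<le> (\<integral>\<^sup>+x. ennreal (- h x) \<partial>mu)"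
  proof (rule sd_nn[OF pn pm])
    show "(\<lambda>x. - h x) \<in> borel_measurable borel" using hm(2) by measurable
    fix t
    have Lb: "{x. t < - h x} \<in> sets borel" using hm(2) by measurable
    have "measure nu {x. t < - h x} \<le> measure mu {x. t < - h x}"
      by (rule sd_lower[OF pm pn cdf Lb]) (metis (mono_tags) mem_Collect_eq monoD neg_le_iff_le less_le_trans hm(1))
    then show "emeasure nu {x. t < - h x} \<le> emeasure mu {x. t < - h x}"
      by (simp add: mu.emeasure_eq_measure nu.emeasure_eq_measure)
  qed
  have f1: "(\<integral>\<^sup>+x. ennreal (h x) \<partial>nu) < top" using nn_fin[OF inu] by simp
  have f2: "(\<integral>\<^sup>+x. ennreal (- h x) \<partial>mu) < top" using nn_fin[of mu "\<lambda>x. - h x"] im by simp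
  show ?thesis
    unfolding real_lebesgue_integral_def[OF im] real_lebesgue_integral_def[OF inu]
    using enn2real_mono[OF p1 f1] enn2real_mono[OF p2 f2] by simp
qed

lemma dirac_prod:
  fixes f :: "real \<times> real \<Rightarrow> real"
  assumes fm[measurable]: "f \<in> borel_measurable (borel \<Otimes>\<^sub>M borel)" and bd: "\<And>z. \<bar>f z\<bar> \<le> B"
  shows "integrable (return borel a \<Otimes>\<^sub>M return borel b) f"
    and "(\<integral>z. f z \<partial>(return borel a \<Otimes>\<^sub>M return borel b)) = f (a, b)"
proof -
  interpret P: pair_prob_space "return borel a" "return borel b"
    by (simp add: pair_prob_space.intro pair_sigma_finite_def prob_space_imp_sigma_finite prob_space_return)
  have fm2: "f \<in> borel_measurable (return borel a \<Otimes>\<^sub>M return borel b)"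
    using fm by (subst measurable_cong_sets[OF sets_pair_measure_cong[OF sets_return sets_return] refl])
  show I: "integrable (return borel a \<Otimes>\<^sub>M return borel b) f"
    by (rule P.integrable_const_bound[where B=B]) (use bd fm2 in auto)
  have "(\<integral>z. f z \<partial>(return borel a \<Otimes>\<^sub>M return borel b))
      = (\<integral>a'. (\<integral>b'. f (a', b') \<partial>return borel b) \<partial>return borel a)"
    using P.integral_fst'[OF I] by simp
  also have "\<dots> = (\<integral>a'. f (a', b) \<partial>return borel a)"
  proof -
    have meas: "(\<lambda>b'. f (a', b')) \<in> borel_measurable (return borel b)" for a'
      unfolding measurable_cong_sets[OF sets_return refl] by measurable
    show ?thesis by (intro Bochner_Integration.integral_cong refl integral_return) (auto simp: meas)
  qed
  also have "\<dots> = f (a, b)"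
  proof -
    have meas: "(\<lambda>a'. f (a', b)) \<in> borel_measurable (return borel a)"
      unfolding measurable_cong_sets[OF sets_return refl] by measurable
    show ?thesis by (rule integral_return) (auto simp: meas)
  qed
  finally show "(\<integral>z. f z \<partial>(return borel a \<Otimes>\<^sub>M return borel b)) = f (a, b)" .
qed

theorem proposition4p4:
  fixes M :: "'a measure" and X Y :: "'a \<Rightarrow> real" and K :: "real \<Rightarrow> real measure"
  assumes "prob_space M"
    and "X \<in> borel_measurable M" and "Y \<in> borel_measurable M"
    and "regular_cond_distr M X Y K"
  shows "(\<forall>g h. mono g \<and> g \<in> borel_measurable borel \<and>
                mono h \<and> h \<in> borel_measurable borel \<and>
                (\<forall>x. integrable (K x) h) \<longrightarrow>
             (\<forall>\<rho>1 \<rho>2. borel_prob \<rho>1 \<and> borel_prob \<rho>2 \<longrightarrow>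
                weakly_comonotonic g (cond_exp_fun K h) \<rho>1 \<rho>2))
         \<longleftrightarrow> pos_regr_dep K"
proof -
  have kp: "\<And>x. prob_space (K x)" and ks: "\<And>x. sets (K x) = sets borel"
    and km: "\<And>B. B \<in> sets borel \<Longrightarrow> (\<lambda>x. measure (K x) B) \<in> borel_measurable borel"
    using assms(4) unfolding regular_cond_distr_def by auto
  show ?thesis
  proof
    assume H: "\<forall>g h. mono g \<and> g \<in> borel_measurable borel \<and>
                mono h \<and> h \<in> borel_measurable borel \<and>
                (\<forall>x. integrable (K x) h) \<longrightarrow>
             (\<forall>\<rho>1 \<rho>2. borel_prob \<rho>1 \<and> borel_prob \<rho>2 \<longrightarrow>
                weakly_comonotonic g (cond_exp_fun K h) \<rho>1 \<rho>2)"
    show "pos_regr_dep K"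
      unfolding pos_regr_dep_def
    proof (intro allI antimonoI)
      fix y x x' :: real
      assume xx: "x \<le> x'"
      show "cond_cdf K y x' \<le> cond_cdf K y x"
      proof (cases "x = x'")
        case True then show ?thesis by simp
      next
        case False
        with xx have lt: "x < x'" by simp
        define h :: "real \<Rightarrow> real" where "h = indicator {y<..}"
        define g :: "real \<Rightarrow> real" where "g = indicator {x<..}"
        have hmono: "mono h" unfolding h_def by (intro monoI) (auto simp: indicator_def)
        have gmono: "mono g" unfolding g_def by (intro monoI) (auto simp: indicator_def)
        have hm: "h \<in> borel_measurable borel" unfolding h_def by measurable
        have gm: "g \<in> borel_measurable borel" unfolding g_def by measurable
        have hint: "integrable (K z) h" for z
        proof -
          interpret prob_space "K z" by (rule kp)
          show ?thesis unfolding h_def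
            by (rule integrable_real_indicator) (auto simp: ks emeasure_eq_measure)
        qed
        have hs: "cond_exp_fun K h z = measure (K z) {y<..}" for z
          unfolding cond_exp_fun_def h_def by (simp add: ks)
        have hs2: "cond_exp_fun K h z = 1 - cond_cdf K y z" for z
        proof -
          interpret prob_space "K z" by (rule kp)
          have sp: "space (K z) = UNIV" using sets_eq_imp_space_eq[OF ks[of z]] by simp
          have "UNIV - {..y} = {y<..}" by auto
          then show ?thesis using prob_compl[of "{..y}"] sp unfolding hs cond_cdf_def
            by (simp add: ks)
        qed
        have hsm: "cond_exp_fun K h \<in> borel_measurable borel"
          unfolding hs using km[of "{y<..}"] by simp
        have hsb: "\<bar>cond_exp_fun K h z\<bar> \<le> 1" for z
        proof -
          interpret prob_space "K z" by (rule kp)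
          show ?thesis unfolding hs by simp
        qed
        define u where "u = (\<lambda>(a, b). (g a - g b) * (cond_exp_fun K h a - cond_exp_fun K h b))"
        have um: "u \<in> borel_measurable (borel \<Otimes>\<^sub>M borel)"
          unfolding u_def using gm hsm by measurable
        have ub: "\<bar>u z\<bar> \<le> 2" for z
        proof -
          obtain a b where z: "z = (a, b)" by (cases z)
          have "\<bar>g a - g b\<bar> \<le> 1" unfolding g_def by (auto simp: indicator_def)
          moreover have "\<bar>cond_exp_fun K h a - cond_exp_fun K h b\<bar> \<le> 2"
            using hsb[of a] hsb[of b] by linarith
          ultimately have "\<bar>g a - g b\<bar> * \<bar>cond_exp_fun K h a - cond_exp_fun K h b\<bar> \<le> 1 * 2"
            by (intro mult_mono) auto
          then show ?thesis unfolding z u_def by (simp add: abs_mult)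
        qed
        have bp: "borel_prob (return borel a)" for a
          unfolding borel_prob_def by (simp add: prob_space_return)
        have wc: "weakly_comonotonic g (cond_exp_fun K h) (return borel x) (return borel x')"
          using H hmono gmono hm gm hint bp by blast
        have "0 \<le> u (x, x')"
          using wc dirac_prod[OF um ub, of x x'] unfolding weakly_comonotonic_def u_def Let_def
          by simp
        then have "0 \<le> (0 - 1) * (cond_exp_fun K h x - cond_exp_fun K h x')"
          unfolding u_def g_def using lt by simp
        then show ?thesis unfolding hs2 by simp
      qed
    qed
  next
    assume P: "pos_regr_dep K"
    show "\<forall>g h. mono g \<and> g \<in> borel_measurable borel \<and>
                mono h \<and> h \<in> borel_measurable borel \<and>
                (\<forall>x. integrable (K x) h) \<longrightarrow>
             (\<forall>\<rho>1 \<rho>2. borel_prob \<rho>1 \<and> borel_prob \<rho>2 \<longrightarrow>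
                weakly_comonotonic g (cond_exp_fun K h) \<rho>1 \<rho>2)"
    proof (intro allI impI)
      fix g h :: "real \<Rightarrow> real" and \<rho>1 \<rho>2 :: "real measure"
      assume A: "mono g \<and> g \<in> borel_measurable borel \<and>
                mono h \<and> h \<in> borel_measurable borel \<and> (\<forall>x. integrable (K x) h)"
      have hsmono: "cond_exp_fun K h a \<le> cond_exp_fun K h b" if ab: "a \<le> b" for a b
        unfolding cond_exp_fun_def
      proof (rule sd_integral[OF kp ks kp ks])
        show "\<forall>y. measure (K b) {..y} \<le> measure (K a) {..y}"
          using P ab unfolding pos_regr_dep_def cond_cdf_def by (auto dest: antimonoD)
      qed (use A in auto)
      have nn: "0 \<le> (g a - g b) * (cond_exp_fun K h a - cond_exp_fun K h b)" for a b
      proof (cases "a \<le> b")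
        case True
        then show ?thesis using hsmono[OF True] A monoD[of g a b]
          by (intro mult_nonpos_nonpos) auto
      next
        case False
        then have ba: "b \<le> a" by simp
        then show ?thesis using hsmono[OF ba] A monoD[of g b a]
          by (intro mult_nonneg_nonneg) auto
      qed
      show "weakly_comonotonic g (cond_exp_fun K h) \<rho>1 \<rho>2"
        unfolding weakly_comonotonic_def Let_def
        using nn by (auto intro!: integral_nonneg split: prod.splits)
    qed
  qed
qed

end
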